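(* Let $f\in A[X]$ be monic with discriminant $\Delta=\mathrm{Res}_X(f,f')\neq 0$, $r=v(\Delta)$, and let $N>r$ be an integer. Let $f_N\in (A/\pi^NA)[X]$ be the reduction of $f$ modulo $\pi^N$ and $S_N\subseteq A/\pi^NA$ its set of roots. Then the number of roots of $f$ in $K$ is at most $|S_N/\approx|$.
   Context: $K$ is a field complete with respect to a non-archimedean discrete valuation $v$, normalized by $v(\pi)=1$ for a uniformizer $\pi$ of the valuation ring $A=\{x\in K: v(x)\geq 0\}$; the residue field $A/\pi A$ is finite. The equivalence relation $\approx$ on $S_N$ is: $x\approx y$ iff either $N\leq r$ and $x=y$, or $N>r$ and $x\equiv y \pmod{\overline{\pi}^{\,r+1}}$, where $\overline{\pi}$ is the image of $\pi$ in $A/\pi^NA$. *)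

theory Defs
  imports "Subresultants.Resultant_Prelim"
begin

text \<open>A field K with a discrete valuation v, normalized by v(pi) = 1.
  The valuation is only meaningful on nonzero elements (v 0 is irrelevant; v(0) = +infinity
  is encoded by the predicate val_ge).\<close>

definition val_ge :: "('a::field \<Rightarrow> int) \<Rightarrow> 'a \<Rightarrow> int \<Rightarrow> bool" where
  "val_ge v x M \<longleftrightarrow> x = 0 \<or> v x \<ge> M"

definition val_ring :: "('a::field \<Rightarrow> int) \<Rightarrow> 'a set" where
  "val_ring v = {x. val_ge v x 0}"

definition cong_pow :: "('a::field \<Rightarrow> int) \<Rightarrow> nat \<Rightarrow> ('a \<times> 'a) set" where
  "cong_pow v N = {(x, y). x \<in> val_ring v \<and> y \<in> val_ring v \<and> val_ge v (x - y) (int N)}"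

definition quot_ring :: "('a::field \<Rightarrow> int) \<Rightarrow> nat \<Rightarrow> 'a set set" where
  "quot_ring v N = val_ring v // cong_pow v N"

definition discrete_valued_field :: "('a::field \<Rightarrow> int) \<Rightarrow> 'a \<Rightarrow> bool" where
  "discrete_valued_field v \<pi> \<longleftrightarrow>
     (\<forall>x y. x \<noteq> 0 \<longrightarrow> y \<noteq> 0 \<longrightarrow> v (x * y) = v x + v y) \<and>
     (\<forall>x y. x \<noteq> 0 \<longrightarrow> y \<noteq> 0 \<longrightarrow> x + y \<noteq> 0 \<longrightarrow> v (x + y) \<ge> min (v x) (v y)) \<and>
     \<pi> \<noteq> 0 \<and> v \<pi> = 1"

definition val_complete :: "('a::field \<Rightarrow> int) \<Rightarrow> bool" where
  "val_complete v \<longleftrightarrow>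
     (\<forall>s :: nat \<Rightarrow> 'a. (\<forall>M. \<exists>n0. \<forall>m\<ge>n0. \<forall>n\<ge>n0. val_ge v (s m - s n) M) \<longrightarrow>
        (\<exists>L. \<forall>M. \<exists>n0. \<forall>n\<ge>n0. val_ge v (s n - L) M))"

definition finite_residue_field :: "('a::field \<Rightarrow> int) \<Rightarrow> bool" where
  "finite_residue_field v \<longleftrightarrow> finite (quot_ring v 1)"

text \<open>S_N: roots of f mod pi^N in A/pi^N A. A class C is a root of f_N iff
  f(x) lies in pi^N A for a (any) representative x of C.\<close>
definition roots_mod :: "('a::field \<Rightarrow> int) \<Rightarrow> 'a poly \<Rightarrow> nat \<Rightarrow> 'a set set" where
  "roots_mod v f N = {C \<in> quot_ring v N. \<exists>x\<in>C. val_ge v (poly f x) (int N)}"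

definition approx_rel :: "('a::field \<Rightarrow> int) \<Rightarrow> 'a poly \<Rightarrow> nat \<Rightarrow> nat \<Rightarrow> ('a set \<times> 'a set) set" where
  "approx_rel v f N r = {(C, D). C \<in> roots_mod v f N \<and> D \<in> roots_mod v f N \<and>
     ((N \<le> r \<and> C = D) \<or>
      (N > r \<and> (\<exists>x\<in>C. \<exists>y\<in>D. (x, y) \<in> cong_pow v (r + 1))))}"

end

theory Submission
  imports Defs "Subresultants.Subresultant"
begin

locale dvf =
  fixes v :: "'a::field \<Rightarrow> int" and \<pi> :: 'a
  assumes dvf: "discrete_valued_field v \<pi>"
begin

lemma vmult: "x \<noteq> 0 \<Longrightarrow> y \<noteq> 0 \<Longrightarrow> v (x * y) = v x + v y"
  using dvf unfolding discrete_valued_field_def by blast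

lemma vadd: "x \<noteq> 0 \<Longrightarrow> y \<noteq> 0 \<Longrightarrow> x + y \<noteq> 0 \<Longrightarrow> v (x + y) \<ge> min (v x) (v y)"
  using dvf unfolding discrete_valued_field_def by blast

lemma pi_nz: "\<pi> \<noteq> 0" and v_pi: "v \<pi> = 1"
  using dvf unfolding discrete_valued_field_def by blast+

lemma v_one: "v 1 = 0"
  using vmult[of 1 1] by simp

lemma v_neg_one: "v (-1) = 0"
  using vmult[of "-1" "-1"] v_one by simp

lemma v_uminus: "x \<noteq> 0 \<Longrightarrow> v (- x) = v x"
  using vmult[of "-1" x] v_neg_one by simp

lemma val_ge_0[simp]: "val_ge v 0 M"
  by (simp add: val_ge_def)

lemma val_ge_add: "val_ge v x M \<Longrightarrow> val_ge v y M \<Longrightarrow> val_ge v (x + y) M"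
  unfolding val_ge_def using vadd[of x y] by fastforce

lemma val_ge_uminus: "val_ge v x M \<Longrightarrow> val_ge v (- x) M"
  unfolding val_ge_def by (cases "x = 0") (auto simp: v_uminus)

lemma val_ge_diff: "val_ge v x M \<Longrightarrow> val_ge v y M \<Longrightarrow> val_ge v (x - y) M"
  using val_ge_add[of x M "-y"] val_ge_uminus[of y M] by simp

lemma val_ge_mult: "val_ge v x a \<Longrightarrow> val_ge v y b \<Longrightarrow> val_ge v (x * y) (a + b)"
  unfolding val_ge_def by (cases "x = 0 \<or> y = 0") (auto simp: vmult)

lemma val_ge_mono: "val_ge v x a \<Longrightarrow> b \<le> a \<Longrightarrow> val_ge v x b"
  unfolding val_ge_def by auto

lemma val_ge_mult0: "val_ge v x 0 \<Longrightarrow> val_ge v y b \<Longrightarrow> val_ge v (x * y) b"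
  using val_ge_mult[of x 0 y b] by simp

lemma val_ge_one: "val_ge v 1 0"
  unfolding val_ge_def using v_one by simp

lemma val_ge_sum: "(\<And>i. i \<in> S \<Longrightarrow> val_ge v (f i) M) \<Longrightarrow> val_ge v (sum f S) M"
proof (induction S rule: infinite_finite_induct)
  case (insert x F)
  then show ?case by (simp add: val_ge_add)
qed auto

lemma val_ge_prod0: "(\<And>i. i \<in> S \<Longrightarrow> val_ge v (f i) 0) \<Longrightarrow> val_ge v (prod f S) 0"
proof (induction S rule: infinite_finite_induct)
  case (insert x F)
  then show ?case using val_ge_mult[of "f x" 0 "prod f F" 0] by simp
qed (auto simp: val_ge_one)

lemma val_ge_of_nat: "val_ge v (of_nat k) 0"
  by (induction k) (auto simp: val_ge_add val_ge_one)

lemma v_power: "x \<noteq> 0 \<Longrightarrow> v (x ^ n) = int n * v x"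
  by (induction n) (auto simp: v_one vmult algebra_simps)

lemma val_ge_power: "val_ge v x 0 \<Longrightarrow> val_ge v (x ^ n) 0"
  by (induction n) (auto simp: val_ge_one dest: val_ge_mult[of x 0 _ 0])

lemma val_ge_pi_pow: "val_ge v (\<pi> ^ n) (int n)"
  unfolding val_ge_def using v_power[OF pi_nz, of n] v_pi by simp

lemma val_ge_div_pi: "val_ge v x (int n + M) \<Longrightarrow> val_ge v (x / \<pi> ^ n) M"
proof -
  assume a: "val_ge v x (int n + M)"
  show ?thesis
  proof (cases "x = 0")
    case False
    have pn: "\<pi> ^ n \<noteq> 0" using pi_nz by simp
    have "x = (x / \<pi> ^ n) * \<pi> ^ n" using pn by simp
    then have "v x = v (x / \<pi> ^ n) + int n"
      using vmult[of "x / \<pi> ^ n" "\<pi> ^ n"] pn False v_power[OF pi_nz, of n] v_pi by simp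
    then show ?thesis using a False unfolding val_ge_def by auto
  qed simp
qed

lemma val_ge_signof: "val_ge v (signof p) 0"
  unfolding sign_def using val_ge_one val_ge_uminus by auto

lemma equiv_cong: "equiv (val_ring v) (cong_pow v n)"
proof (rule equivI)
  show "cong_pow v n \<subseteq> val_ring v \<times> val_ring v" by (auto simp: cong_pow_def)
  show "refl_on (val_ring v) (cong_pow v n)"
    by (auto simp: refl_on_def cong_pow_def)
  show "sym (cong_pow v n)"
    by (rule symI) (auto simp: cong_pow_def dest: val_ge_uminus)
  show "trans (cong_pow v n)"
  proof (rule transI)
    fix x y z assume "(x, y) \<in> cong_pow v n" "(y, z) \<in> cong_pow v n"
    then show "(x, z) \<in> cong_pow v n"
      unfolding cong_pow_def using val_ge_add[of "x - y" "int n" "y - z"] by auto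
  qed
qed

lemma class_in_quot: "x \<in> val_ring v \<Longrightarrow> cong_pow v m `` {x} \<in> quot_ring v m"
  unfolding quot_ring_def by (rule quotientI)

lemma self_in_class: "x \<in> val_ring v \<Longrightarrow> x \<in> cong_pow v m `` {x}"
  by (simp add: cong_pow_def)

lemma quot_nonempty: "X \<in> quot_ring v m \<Longrightarrow> \<exists>x\<in>val_ring v. X = cong_pow v m `` {x}"
  unfolding quot_ring_def by (auto elim!: quotientE)

lemma in_val_ring: "x \<in> val_ring v \<longleftrightarrow> val_ge v x 0"
  by (simp add: val_ring_def)

lemma finite_quot:
  assumes fin1: "finite (quot_ring v 1)"
  shows "finite (quot_ring v (Suc n))"
proof (induction n)
  case 0 then show ?case using fin1 by simp
next
  case (Suc n)
  define m where "m = Suc n"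
  define Q where "Q = quot_ring v m"
  define P where "P = quot_ring v 1"
  define rep where "rep = (\<lambda>c::'a set. SOME a. a \<in> c)"
  define \<psi> where "\<psi> = (\<lambda>(c, d). cong_pow v (Suc m) `` {rep c + \<pi> ^ m * rep d})"
  have finQP: "finite (Q \<times> P)" using Suc.IH fin1 unfolding Q_def P_def m_def by simp
  have rep: "(x, rep (cong_pow v k `` {x})) \<in> cong_pow v k" if "x \<in> val_ring v" for x k
  proof -
    have "x \<in> cong_pow v k `` {x}" using self_in_class[OF that] .
    then have "rep (cong_pow v k `` {x}) \<in> cong_pow v k `` {x}"
      unfolding rep_def by (rule someI)
    then show ?thesis by simp
  qed
  have "quot_ring v (Suc m) \<subseteq> \<psi> ` (Q \<times> P)"
  proof
    fix X assume "X \<in> quot_ring v (Suc m)"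
    then obtain x where x: "x \<in> val_ring v" and X: "X = cong_pow v (Suc m) `` {x}"
      using quot_nonempty by blast
    define c where "c = cong_pow v m `` {x}"
    define a where "a = rep c"
    have xa: "(x, a) \<in> cong_pow v m" using rep[OF x] unfolding a_def c_def .
    then have a: "val_ge v a 0" and xa': "val_ge v (x - a) (int m + 0)"
      by (auto simp: cong_pow_def in_val_ring)
    define z where "z = (x - a) / \<pi> ^ m"
    have z: "z \<in> val_ring v" using val_ge_div_pi[OF xa'] unfolding z_def in_val_ring .
    define d where "d = cong_pow v 1 `` {z}"
    define b where "b = rep d"
    have zb: "(z, b) \<in> cong_pow v 1" using rep[OF z] unfolding b_def d_def .
    then have b: "val_ge v b 0" and zb': "val_ge v (z - b) 1"
      by (auto simp: cong_pow_def in_val_ring)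
    define y where "y = a + \<pi> ^ m * b"
    have pm: "val_ge v (\<pi> ^ m) 0" using val_ge_pi_pow[of m] val_ge_mono by fastforce
    have y: "val_ge v y 0" unfolding y_def
      by (rule val_ge_add[OF a], rule val_ge_mult0[OF pm b])
    have pmz: "\<pi> ^ m \<noteq> 0" using pi_nz by simp
    have "\<pi> ^ m * z = x - a" unfolding z_def using pmz by simp
    then have "x - y = \<pi> ^ m * (z - b)" unfolding y_def
      by (simp add: algebra_simps)
    then have "val_ge v (x - y) (int m + 1)"
      using val_ge_mult[OF val_ge_pi_pow zb'] by simp
    then have "(x, y) \<in> cong_pow v (Suc m)"
      using x y by (auto simp: cong_pow_def in_val_ring add.commute)
    then have "X = cong_pow v (Suc m) `` {y}"
      unfolding X by (rule equiv_class_eq[OF equiv_cong])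
    moreover have "(c, d) \<in> Q \<times> P"
      unfolding Q_def P_def c_def d_def using class_in_quot x z by blast
    ultimately show "X \<in> \<psi> ` (Q \<times> P)"
      unfolding \<psi>_def y_def a_def b_def by force
  qed
  then show ?case using finQP finite_subset unfolding m_def by blast
qed

lemma poly_ge0:
  assumes "\<And>i. val_ge v (coeff p i) 0" "val_ge v x 0"
  shows "val_ge v (poly p x) 0"
  unfolding poly_altdef
  by (rule val_ge_sum, rule val_ge_mult0, rule assms, rule val_ge_power, rule assms)

lemma poly_diff:
  assumes "\<And>i. val_ge v (coeff p i) 0" "val_ge v x 0" "val_ge v y 0" "val_ge v (x - y) M"
  shows "val_ge v (poly p x - poly p y) M"
  using assms(1)
proof (induction p)
  case 0 then show ?case by simp
next
  case (pCons a p)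
  have cp: "val_ge v (coeff p i) 0" for i using pCons.prems[of "Suc i"] by simp
  have "poly (pCons a p) x - poly (pCons a p) y
      = x * (poly p x - poly p y) + (x - y) * poly p y" by (simp add: algebra_simps)
  moreover have "val_ge v (x * (poly p x - poly p y)) M"
    by (rule val_ge_mult0[OF assms(2) pCons.IH[OF cp]])
  moreover have "val_ge v ((x - y) * poly p y) M"
    using val_ge_mult[OF assms(4) poly_ge0[OF cp assms(3)]] by simp
  ultimately show ?case by (simp add: val_ge_add)
qed

lemma synth_coeffs:
  assumes "\<And>i. val_ge v (coeff p i) 0" "val_ge v c 0"
  shows "val_ge v (coeff (synthetic_div p c) i) 0"
  using assms(1)
proof (induction p arbitrary: i)
  case 0 then show ?case by simp
next
  case (pCons a p)
  have cp: "val_ge v (coeff p i) 0" for i using pCons.prems[of "Suc i"] by simp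
  show ?case
    using pCons.IH[OF cp] poly_ge0[OF cp assms(2)] by (cases i) auto
qed

lemma root_in_ring:
  assumes cf: "\<And>i. val_ge v (coeff f i) 0" and mon: "monic f" and root: "poly f \<alpha> = 0"
  shows "val_ge v \<alpha> 0"
proof (rule ccontr)
  assume na: "\<not> val_ge v \<alpha> 0"
  then have a0: "\<alpha> \<noteq> 0" and va: "v \<alpha> < 0" by (auto simp: val_ge_def)
  define d where "d = degree f"
  have d0: "d \<noteq> 0"
  proof
    assume "d = 0"
    then have "poly f \<alpha> = coeff f 0" by (simp add: d_def poly_altdef)
    then show False using mon root \<open>d = 0\<close> d_def by simp
  qed
  define M where "M = int (d - 1) * v \<alpha>"
  have "poly f \<alpha> = (\<Sum>i<d. coeff f i * \<alpha> ^ i) + \<alpha> ^ d"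
    unfolding poly_altdef d_def[symmetric] using mon d_def
    by (simp add: lessThan_Suc_atMost[symmetric])
  then have eq: "\<alpha> ^ d = - (\<Sum>i<d. coeff f i * \<alpha> ^ i)" using root
    by (simp add: eq_neg_iff_add_eq_0 add.commute)
  have "val_ge v (\<Sum>i<d. coeff f i * \<alpha> ^ i) M"
  proof (rule val_ge_sum)
    fix i assume "i \<in> {..<d}"
    then have "i \<le> d - 1" by auto
    then have "int i * v \<alpha> \<ge> M" unfolding M_def using va
      by (simp add: mult_right_mono_neg)
    moreover have "val_ge v (\<alpha> ^ i) (int i * v \<alpha>)"
      using v_power[OF a0, of i] by (simp add: val_ge_def)
    ultimately show "val_ge v (coeff f i * \<alpha> ^ i) M"
      using val_ge_mult0[OF cf] val_ge_mono by blast
  qed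
  then have "val_ge v (\<alpha> ^ d) M" using eq val_ge_uminus by metis
  moreover have "v (\<alpha> ^ d) < M" using v_power[OF a0, of d] d0 va unfolding M_def
    by (simp add: of_nat_diff)
  ultimately show False using a0 by (simp add: val_ge_def)
qed

lemma resultant_val:
  assumes cF: "\<And>i. val_ge v (coeff F i) 0" and cG: "\<And>i. val_ge v (coeff G i) 0"
    and a: "val_ge v \<alpha> 0" and rF: "poly F \<alpha> = 0" and gG: "val_ge v (poly G \<alpha>) M"
    and dF: "degree F \<noteq> 0"
  shows "val_ge v (resultant F G) M"
proof -
  define n where "n = degree F + degree G"
  define S where "S = subresultant_mat 0 F G"
  have S: "S \<in> carrier_mat n n" unfolding carrier_mat_def S_def n_def using subresultant_mat_dim[of 0 F G] by simp
  have n0: "n > 0" using dF n_def by simp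
  have "resultant F G = poly (subresultant 0 F G) \<alpha>" unfolding subresultant_resultant by simp
  also have "\<dots> = poly (det S) \<alpha>" by (simp only: subresultant_def S_def)
  also have "\<dots> = (\<Sum>p\<in>{p. p permutes {0..<n}}. poly (signof p) \<alpha> *
      (\<Prod>i=0..<n. poly (S $$ (i, p i)) \<alpha>))"
    by (simp only: det_def'[OF S] poly_sum poly_mult poly_prod)
  finally have eq: "resultant F G = \<dots>" .
  show ?thesis unfolding eq
  proof (rule val_ge_sum)
    fix p assume "p \<in> {p. p permutes {0..<n}}"
    then have pp: "p permutes {0..<n}" by simp
    have pin: "i < n \<Longrightarrow> p i < n" for i using permutes_in_image[OF pp] by simp
    have ent: "val_ge v (poly (S $$ (i, p i)) \<alpha>) (if i = n - 1 then M else 0)" if i: "i < n" for i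
    proof -
      have j: "p i < n" using pin[OF i] .
      have Sij: "S $$ (i, p i) = (if p i < degree G then
         if i = n - 1 then monom 1 (degree G - 1 - p i) * F else [: coeff_int F (int (degree F) - int i + int (p i)) :]
        else if i = n - 1 then monom 1 (degree F - 1 - (p i - degree G)) * G
          else [: coeff_int G (int (degree G) - int i + int (p i - degree G)) :])"
        using subresultant_index_mat[of i F 0 G "p i"] i j unfolding n_def S_def Let_def by simp
      have gm: "val_ge v (\<alpha> ^ k * poly G \<alpha>) M" for k
        by (rule val_ge_mult0[OF val_ge_power[OF a] gG])
      show ?thesis
      proof (cases "i = n - 1")
        case True
        then show ?thesis unfolding Sij using gm rF by (simp add: poly_monom)
      next
        case False
        have "val_ge v (coeff_int F k) 0" "val_ge v (coeff_int G k) 0" for k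
          unfolding coeff_int_def using cF cG by auto
        then show ?thesis unfolding Sij using False by simp
      qed
    qed
    have pr: "(\<Prod>i=0..<n. poly (S $$ (i, p i)) \<alpha>) =
       poly (S $$ (n - 1, p (n - 1))) \<alpha> * (\<Prod>i\<in>{0..<n} - {n - 1}. poly (S $$ (i, p i)) \<alpha>)"
      by (rule prod.remove) (use n0 in auto)
    have l: "val_ge v (poly (S $$ (n - 1, p (n - 1))) \<alpha>) M"
      using ent[of "n - 1"] n0 by simp
    have r: "val_ge v (\<Prod>i\<in>{0..<n} - {n - 1}. poly (S $$ (i, p i)) \<alpha>) 0"
    proof (rule val_ge_prod0)
      fix i assume "i \<in> {0..<n} - {n - 1}"
      then show "val_ge v (poly (S $$ (i, p i)) \<alpha>) 0" using ent[of i] by auto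
    qed
    have "val_ge v (\<Prod>i=0..<n. poly (S $$ (i, p i)) \<alpha>) M"
      unfolding pr using val_ge_mult[OF l r] by simp
    moreover have "val_ge v (poly (signof p) \<alpha>) 0"
      by (cases p rule: sign_cases) (auto simp: val_ge_one intro: val_ge_uminus)
    ultimately show "val_ge v (poly (signof p) \<alpha> * (\<Prod>i=0..<n. poly (S $$ (i, p i)) \<alpha>)) M"
      using val_ge_mult0 by blast
  qed
qed

lemma two_roots_val:
  assumes cf: "\<And>i. val_ge v (coeff f i) 0" and f0: "f \<noteq> 0"
    and a: "val_ge v \<alpha> 0" and b: "val_ge v \<beta> 0"
    and ra: "poly f \<alpha> = 0" and rb: "poly f \<beta> = 0" and ne: "\<alpha> \<noteq> \<beta>"
    and d: "val_ge v (\<alpha> - \<beta>) M"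
  shows "val_ge v (resultant f (pderiv f)) M"
proof -
  define h where "h = synthetic_div f \<alpha>"
  have fh: "f = [:-\<alpha>, 1:] * h" using synthetic_div_correct'[of \<alpha> f] ra by (simp add: h_def)
  have ch: "val_ge v (coeff h i) 0" for i unfolding h_def by (rule synth_coeffs[OF cf a])
  have cg: "val_ge v (coeff (pderiv f) i) 0" for i
    unfolding coeff_pderiv by (rule val_ge_mult0[OF val_ge_of_nat cf])
  have "pderiv f = [:-\<alpha>, 1:] * pderiv h + h"
  proof -
    have "pderiv [:-\<alpha>, 1:] = 1" by (simp add: pderiv_pCons)
    then show ?thesis by (subst fh, simp only: pderiv_mult) simp
  qed
  then have pa: "poly (pderiv f) \<alpha> = poly h \<alpha>" by simp
  have "poly f \<beta> = (\<beta> - \<alpha>) * poly h \<beta>" by (subst fh) (simp add: algebra_simps)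
  then have "0 = (\<beta> - \<alpha>) * poly h \<beta>" using rb by simp
  then have hb: "poly h \<beta> = 0" using ne by simp
  have "val_ge v (poly h \<alpha> - poly h \<beta>) M" by (rule poly_diff[OF ch a b d])
  then have gm: "val_ge v (poly (pderiv f) \<alpha>) M" using pa hb by simp
  have df: "degree f \<noteq> 0"
  proof
    assume "degree f = 0"
    then have "poly f \<alpha> = coeff f 0" by (simp add: poly_altdef)
    moreover have "coeff f 0 \<noteq> 0" using f0 \<open>degree f = 0\<close> leading_coeff_0_iff by fastforce
    ultimately show False using ra by simp
  qed
  show ?thesis by (rule resultant_val[OF cf cg a ra gm df])
qed

end

theorem lemma3p5:
  fixes v :: "'a::field \<Rightarrow> int" and \<pi> :: 'a and f :: "'a poly" and N r :: nat
  assumes "discrete_valued_field v \<pi>"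
    and "val_complete v"
    and "finite_residue_field v"
    and "\<forall>i. coeff f i \<in> val_ring v"
    and "monic f"
    and "resultant f (pderiv f) \<noteq> 0"
    and "int r = v (resultant f (pderiv f))"
    and "N > r"
  shows "card {x. poly f x = 0} \<le> card (roots_mod v f N // approx_rel v f N r)"
proof -
  interpret dvf v \<pi> by (rule dvf.intro) (rule assms(1))
  have cf: "val_ge v (coeff f i) 0" for i using assms(4) by (simp add: in_val_ring)
  have f0: "f \<noteq> 0" using assms(5) by auto
  define Z where "Z = {x. poly f x = 0}"
  define T where "T = roots_mod v f N // approx_rel v f N r"
  define cls where "cls = (\<lambda>x. cong_pow v N `` {x})"
  define H where "H = (\<lambda>x. approx_rel v f N r `` {cls x})"
  have Zr: "x \<in> Z \<Longrightarrow> val_ge v x 0" for x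
    unfolding Z_def using root_in_ring[OF cf assms(5)] by blast
  have cls_in: "cls x \<in> roots_mod v f N" if x: "x \<in> Z" for x
  proof -
    have xr: "x \<in> val_ring v" using Zr[OF x] by (simp add: in_val_ring)
    have "x \<in> cls x" "cls x \<in> quot_ring v N" "poly f x = 0"
      unfolding cls_def using class_in_quot[OF xr] self_in_class[OF xr] x Z_def by auto
    then show ?thesis unfolding roots_mod_def by (auto intro!: bexI[of _ x])
  qed
  have refl: "(C, C) \<in> approx_rel v f N r" if C: "C \<in> roots_mod v f N" for C
  proof -
    from C obtain y where "y \<in> val_ring v" "C = cong_pow v N `` {y}"
      unfolding roots_mod_def using quot_nonempty by blast
    then have "(y, y) \<in> cong_pow v (r + 1)" "y \<in> C"
      using self_in_class by (auto simp: cong_pow_def)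
    then show ?thesis using C assms(8) unfolding approx_rel_def by blast
  qed
  have HT: "H ` Z \<subseteq> T"
    unfolding H_def T_def using cls_in by (auto intro: quotientI)
  have finT: "finite T"
  proof -
    have "finite (quot_ring v (Suc (N - 1)))"
      by (rule finite_quot) (use assms(3) in \<open>simp add: finite_residue_field_def\<close>)
    then have "finite (quot_ring v N)" using assms(8) by simp
    then have "finite (roots_mod v f N)"
      by (rule finite_subset[rotated]) (auto simp: roots_mod_def)
    moreover have "T \<subseteq> Pow (roots_mod v f N)"
      unfolding T_def quotient_def approx_rel_def by auto
    ultimately show ?thesis by (meson finite_Pow_iff finite_subset)
  qed
  have inj: "inj_on H Z"
  proof (rule inj_onI)
    fix x y assume x: "x \<in> Z" and y: "y \<in> Z" and Hxy: "H x = H y"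
    have "cls x \<in> H x" unfolding H_def using refl[OF cls_in[OF x]] by simp
    then have "(cls y, cls x) \<in> approx_rel v f N r" using Hxy unfolding H_def by simp
    then obtain u w where u: "u \<in> cls y" and w: "w \<in> cls x"
      and uw: "(u, w) \<in> cong_pow v (r + 1)"
      using assms(8) unfolding approx_rel_def by auto
    have "val_ge v (y - u) (int N)" "val_ge v (x - w) (int N)"
      using u w unfolding cls_def cong_pow_def by auto
    then have yu: "val_ge v (y - u) (int (r + 1))" and xw: "val_ge v (x - w) (int (r + 1))"
      using assms(8) val_ge_mono by (smt (verit, best) of_nat_less_iff Suc_eq_plus1 less_eq_Suc_le of_nat_mono)+
    have "val_ge v (u - w) (int (r + 1))" using uw unfolding cong_pow_def by simp
    then have "val_ge v ((y - u) + (u - w) - (x - w)) (int (r + 1))"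
      using yu xw val_ge_add val_ge_diff by blast
    then have d: "val_ge v (y - x) (int (r + 1))" by (simp add: algebra_simps)
    show "x = y"
    proof (rule ccontr)
      assume "x \<noteq> y"
      then have "val_ge v (resultant f (pderiv f)) (int (r + 1))"
        using two_roots_val[OF cf f0 Zr[OF y] Zr[OF x] _ _ _ d] x y unfolding Z_def by auto
      then show False using assms(6,7) unfolding val_ge_def by simp
    qed
  qed
  show ?thesis
    using card_inj_on_le[OF inj HT finT] unfolding Z_def T_def .
qed

end
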